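(* Let $a\ge7$ be an odd integer and $M_a=(4,6,a,a+2)$. Then $$I_{M_a}=\mathrm{rad}\big(x_1^{(a+1)/2}-x_3x_4,\;x_1^3-x_2^2,\;x_3^{a+2}-x_4^{a},\;x_1x_4-x_2x_3\big)$$ in $K[x_1,x_2,x_3,x_4]$, for any field $K$.
   Context: For a $1\times n$ integer row matrix $M=(a_1,\dots,a_n)$ (positive entries), the toric ideal $I_M\subseteq K[x_1,\dots,x_n]$ is the kernel of $K[x_1,\dots,x_n]\to K[t]$, $x_i\mapsto t^{a_i}$. *)

theory Defs
  imports "HOL-Library.Poly_Mapping" "HOL-Computational_Algebra.Polynomial"
begin

text \<open>Multivariate polynomials over K in variables x_i (i :: nat), represented as
  finitely supported maps from monomials (exponent vectors, finitely supported nat to nat maps) to coefficients.\<close>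

type_synonym 'k mpoly = "(nat \<Rightarrow>\<^sub>0 nat) \<Rightarrow>\<^sub>0 'k"

definition Var :: "nat \<Rightarrow> 'k::comm_ring_1 mpoly" where
  "Var i = Poly_Mapping.single (Poly_Mapping.single i 1) 1"

definition polyring :: "nat \<Rightarrow> 'k::comm_ring_1 mpoly set" where
  "polyring n = {p. \<forall>m\<in>Poly_Mapping.keys p. Poly_Mapping.keys m \<subseteq> {1..n}}"

definition toric_map :: "(nat \<Rightarrow> nat) \<Rightarrow> 'k::comm_ring_1 mpoly \<Rightarrow> 'k poly" where
  "toric_map a p = (\<Sum>m\<in>Poly_Mapping.keys p. Polynomial.monom (Poly_Mapping.lookup p m) (\<Sum>i\<in>Poly_Mapping.keys m. a i * Poly_Mapping.lookup m i))"

definition toric_ideal :: "nat \<Rightarrow> (nat \<Rightarrow> nat) \<Rightarrow> 'k::comm_ring_1 mpoly set" where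
  "toric_ideal n a = {p \<in> polyring n. toric_map a p = 0}"

definition gen_ideal :: "nat \<Rightarrow> 'k::comm_ring_1 mpoly set \<Rightarrow> 'k mpoly set" where
  "gen_ideal n G = {p. \<exists>c. (\<forall>g\<in>G. c g \<in> polyring n) \<and> p = (\<Sum>g\<in>G. c g * g)}"

definition radical :: "nat \<Rightarrow> 'k::comm_ring_1 mpoly set \<Rightarrow> 'k mpoly set" where
  "radical n I = {p \<in> polyring n. \<exists>k. p ^ k \<in> I}"

end

theory Submission
  imports Defs
begin


definition dg :: "(nat \<Rightarrow> nat) \<Rightarrow> (nat \<Rightarrow>\<^sub>0 nat) \<Rightarrow> nat" where
  "dg w m = (\<Sum>i\<in>Poly_Mapping.keys m. w i * Poly_Mapping.lookup m i)"

lemma dg_superset: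
  assumes "finite S" "Poly_Mapping.keys m \<subseteq> S"
  shows "dg w m = (\<Sum>i\<in>S. w i * Poly_Mapping.lookup m i)"
  unfolding dg_def
  by (rule sum.mono_neutral_left) (use assms in \<open>auto simp: in_keys_iff\<close>)

lemma dg_add: "dg w (m + n) = dg w m + dg w n"
proof -
  let ?S = "Poly_Mapping.keys m \<union> Poly_Mapping.keys n"
  have "dg w (m + n) = (\<Sum>i\<in>?S. w i * Poly_Mapping.lookup (m+n) i)"
    by (rule dg_superset) (auto dest: keys_add[THEN subsetD])
  also have "\<dots> = (\<Sum>i\<in>?S. w i * Poly_Mapping.lookup m i) + (\<Sum>i\<in>?S. w i * Poly_Mapping.lookup n i)"
    by (simp add: lookup_add sum.distrib algebra_simps)
  also have "\<dots> = dg w m + dg w n"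
    by (simp add: dg_superset[symmetric])
  finally show ?thesis .
qed

lemma dg_zero [simp]: "dg w 0 = 0" by (simp add: dg_def)

lemma dg_single [simp]: "dg w (Poly_Mapping.single i k) = w i * k"
  by (simp add: dg_def)

lemma tm_def2: "toric_map w p = (\<Sum>m\<in>Poly_Mapping.keys p. Polynomial.monom (Poly_Mapping.lookup p m) (dg w m))"
  by (simp add: toric_map_def dg_def)

lemma tm_superset:
  assumes "finite S" "Poly_Mapping.keys p \<subseteq> S"
  shows "toric_map w p = (\<Sum>m\<in>S. Polynomial.monom (Poly_Mapping.lookup p m) (dg w m))"
  unfolding tm_def2
  by (rule sum.mono_neutral_left) (use assms in \<open>auto simp: in_keys_iff\<close>)

lemma tm_add: "toric_map w (p + q) = toric_map w p + toric_map w q"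
proof -
  let ?S = "Poly_Mapping.keys p \<union> Poly_Mapping.keys q"
  have "toric_map w (p + q) = (\<Sum>m\<in>?S. Polynomial.monom (Poly_Mapping.lookup (p+q) m) (dg w m))"
    by (rule tm_superset) (auto dest: keys_add[THEN subsetD])
  also have "\<dots> = (\<Sum>m\<in>?S. Polynomial.monom (Poly_Mapping.lookup p m) (dg w m)) + (\<Sum>m\<in>?S. Polynomial.monom (Poly_Mapping.lookup q m) (dg w m))"
    by (simp add: lookup_add sum.distrib add_monom[symmetric])
  also have "\<dots> = toric_map w p + toric_map w q"
    by (simp add: tm_superset[symmetric])
  finally show ?thesis .
qed

lemma tm_zero [simp]: "toric_map w 0 = 0" by (simp add: toric_map_def)

lemma tm_sum: "toric_map w (sum f S) = (\<Sum>x\<in>S. toric_map w (f x))"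
  by (induction S rule: infinite_finite_induct) (auto simp: tm_add)

lemma tm_single [simp]: "toric_map w (Poly_Mapping.single m c) = Polynomial.monom c (dg w m)"
  by (simp add: tm_def2)

lemma pm_decomp: "p = (\<Sum>m\<in>Poly_Mapping.keys p. Poly_Mapping.single m (Poly_Mapping.lookup p m))"
proof (rule poly_mapping_eqI)
  fix k
  show "Poly_Mapping.lookup p k = Poly_Mapping.lookup (\<Sum>m\<in>Poly_Mapping.keys p. Poly_Mapping.single m (Poly_Mapping.lookup p m)) k"
    by (simp add: lookup_sum lookup_single when_def in_keys_iff)
qed

lemma tm_mult: "toric_map w (p * q) = toric_map w p * toric_map w q"
proof -
  have "p * q = (\<Sum>m\<in>Poly_Mapping.keys p. \<Sum>n\<in>Poly_Mapping.keys q.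
       Poly_Mapping.single m (Poly_Mapping.lookup p m) * Poly_Mapping.single n (Poly_Mapping.lookup q n))"
    by (subst pm_decomp[of p], subst pm_decomp[of q]) (simp add: sum_distrib_left sum_distrib_right sum.swap[of _ "Poly_Mapping.keys q"])
  then have "toric_map w (p * q) = (\<Sum>m\<in>Poly_Mapping.keys p. \<Sum>n\<in>Poly_Mapping.keys q.
       Polynomial.monom (Poly_Mapping.lookup p m) (dg w m) * Polynomial.monom (Poly_Mapping.lookup q n) (dg w n))"
    by (simp add: tm_sum mult_single dg_add mult_monom)
  also have "\<dots> = toric_map w p * toric_map w q"
    by (simp add: tm_def2 sum_distrib_left sum_distrib_right sum.swap[of _ "Poly_Mapping.keys q"])
  finally show ?thesis .
qed

lemma tm_one [simp]: "toric_map w 1 = 1"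
  using tm_single[of w 0 1] by (simp add: monom_0 one_pCons)

lemma tm_power: "toric_map w (p ^ n) = toric_map w p ^ n"
  by (induction n) (simp_all add: tm_mult)

lemma tm_uminus: "toric_map w (- p) = - toric_map w p"
  using tm_add[of w "-p" p] by (simp add: eq_neg_iff_add_eq_0)

lemma tm_diff: "toric_map w (p - q) = toric_map w p - toric_map w q"
  using tm_add[of w p "-q"] by (simp add: tm_uminus)

lemma Var_power: "(Var i :: 'k::comm_ring_1 mpoly) ^ n = Poly_Mapping.single (Poly_Mapping.single i n) 1"
  by (induction n) (simp_all add: Var_def mult_single single_add[symmetric] add.commute)

lemma tm_Var: "toric_map w (Var i) = Polynomial.monom 1 (w i)"
  by (simp add: Var_def)



lemma polyring_iff: "p \<in> polyring n \<longleftrightarrow> (\<forall>m\<in>Poly_Mapping.keys p. Poly_Mapping.keys m \<subseteq> {1..n})"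
  by (simp add: polyring_def)

lemma pr_add: "p \<in> polyring n \<Longrightarrow> q \<in> polyring n \<Longrightarrow> p + q \<in> polyring n"
  unfolding polyring_iff by (auto dest!: keys_add[THEN subsetD])

lemma pr_uminus: "p \<in> polyring n \<Longrightarrow> - p \<in> polyring n"
  unfolding polyring_iff by simp

lemma pr_diff: "p \<in> polyring n \<Longrightarrow> q \<in> polyring n \<Longrightarrow> p - q \<in> polyring n"
  using pr_add[OF _ pr_uminus] by (metis diff_conv_add_uminus)

lemma pr_mult: "p \<in> polyring n \<Longrightarrow> q \<in> polyring n \<Longrightarrow> p * q \<in> polyring n"
  unfolding polyring_iff
proof
  fix m assume p: "\<forall>m\<in>Poly_Mapping.keys p. Poly_Mapping.keys m \<subseteq> {1..n}"
    and q: "\<forall>m\<in>Poly_Mapping.keys q. Poly_Mapping.keys m \<subseteq> {1..n}"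
    and m: "m \<in> Poly_Mapping.keys (p * q)"
  then obtain u v where "m = u + v" "u \<in> Poly_Mapping.keys p" "v \<in> Poly_Mapping.keys q"
    using keys_mult by blast
  then show "Poly_Mapping.keys m \<subseteq> {1..n}" using p q keys_add[of u v] by blast
qed

lemma pr_single: "Poly_Mapping.keys m \<subseteq> {1..n} \<Longrightarrow> Poly_Mapping.single m c \<in> polyring n"
  unfolding polyring_iff by simp

lemma pr_const: "Poly_Mapping.single 0 c \<in> polyring n"
  by (rule pr_single) simp

lemma pr_one: "1 \<in> polyring n"
  using pr_const[of 1] by simp

lemma pr_zero: "0 \<in> polyring n"
  by (simp add: polyring_iff)

lemma pr_of_nat: "of_nat k \<in> polyring n"
  using pr_const[of "of_nat k"] by (simp add: single_of_nat)

lemma pr_power: "p \<in> polyring n \<Longrightarrow> p ^ k \<in> polyring n"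
  by (induction k) (simp_all add: pr_one pr_mult)

lemma pr_Var: "1 \<le> i \<Longrightarrow> i \<le> n \<Longrightarrow> Var i \<in> polyring n"
  unfolding Var_def by (rule pr_single) simp

lemma pr_sum: "(\<And>x. x \<in> S \<Longrightarrow> f x \<in> polyring n) \<Longrightarrow> sum f S \<in> polyring n"
  by (induction S rule: infinite_finite_induct) (auto simp: pr_zero pr_add)

lemma gi_zero: "0 \<in> gen_ideal n G"
  unfolding gen_ideal_def by (rule CollectI, rule exI[of _ "\<lambda>_. 0"]) (simp add: pr_zero)

lemma gi_add: "x \<in> gen_ideal n G \<Longrightarrow> y \<in> gen_ideal n G \<Longrightarrow> x + y \<in> gen_ideal n G"
  unfolding gen_ideal_def
proof (clarify)
  fix c d :: "'a::comm_ring_1 mpoly \<Rightarrow> 'a mpoly" assume "\<forall>g\<in>G. c g \<in> polyring n" "\<forall>g\<in>G. d g \<in> polyring n"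
  then show "\<exists>e. (\<forall>g\<in>G. e g \<in> polyring n) \<and> (\<Sum>g\<in>G. c g * g) + (\<Sum>g\<in>G. d g * g) = (\<Sum>g\<in>G. e g * g)"
    by (intro exI[of _ "\<lambda>g. c g + d g"]) (simp add: pr_add sum.distrib distrib_right)
qed

lemma gi_mult: "r \<in> polyring n \<Longrightarrow> x \<in> gen_ideal n G \<Longrightarrow> r * x \<in> gen_ideal n G"
  unfolding gen_ideal_def
proof (clarify)
  fix c :: "'a::comm_ring_1 mpoly \<Rightarrow> 'a mpoly" assume "r \<in> polyring n" "\<forall>g\<in>G. c g \<in> polyring n"
  then show "\<exists>e. (\<forall>g\<in>G. e g \<in> polyring n) \<and> r * (\<Sum>g\<in>G. c g * g) = (\<Sum>g\<in>G. e g * g)"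
  proof (intro exI[of _ "\<lambda>g. r * c g"] conjI)
    show "\<forall>g\<in>G. r * c g \<in> polyring n" using \<open>r \<in> polyring n\<close> \<open>\<forall>g\<in>G. c g \<in> polyring n\<close> by (simp add: pr_mult)
    show "r * (\<Sum>g\<in>G. c g * g) = (\<Sum>g\<in>G. r * c g * g)"
      by (simp only: sum_distrib_left mult.assoc)
  qed
qed

lemma gi_gen: "finite G \<Longrightarrow> g \<in> G \<Longrightarrow> g \<in> gen_ideal n G"
proof -
  assume G: "finite G" "g \<in> G"
  have "(\<Sum>h\<in>G. (if h = g then 1 else 0) * h) = (\<Sum>h\<in>G. if h = g then h else 0)"
    by (rule sum.cong) auto
  also have "\<dots> = g" using G by (simp add: sum.delta')
  finally have e: "g = (\<Sum>h\<in>G. (if h = g then 1 else 0) * h)" by simp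
  have P: "\<forall>h\<in>G. (if h = g then 1 else 0) \<in> polyring n" by (simp add: pr_one pr_zero)
  show ?thesis unfolding gen_ideal_def mem_Collect_eq
    apply (rule exI[where x="\<lambda>h. if h = g then 1 else 0"]) using P e by (rule conjI)
qed

lemma gi_uminus: "x \<in> gen_ideal n G \<Longrightarrow> - x \<in> gen_ideal n G"
  using gi_mult[OF pr_uminus[OF pr_one]] by fastforce

lemma gi_diff: "x \<in> gen_ideal n G \<Longrightarrow> y \<in> gen_ideal n G \<Longrightarrow> x - y \<in> gen_ideal n G"
  by (metis diff_conv_add_uminus gi_add gi_uminus)

lemma gi_sum: "(\<And>x. x \<in> S \<Longrightarrow> f x \<in> gen_ideal n G) \<Longrightarrow> sum f S \<in> gen_ideal n G"
  by (induction S rule: infinite_finite_induct) (auto simp: gi_zero gi_add)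

lemma gi_pr: "G \<subseteq> polyring n \<Longrightarrow> x \<in> gen_ideal n G \<Longrightarrow> x \<in> polyring n"
  unfolding gen_ideal_def by (auto intro!: pr_sum pr_mult)

lemma rad_in: "G \<subseteq> polyring n \<Longrightarrow> x \<in> gen_ideal n G \<Longrightarrow> x \<in> radical n (gen_ideal n G)"
  unfolding radical_def using gi_pr[of G n x] by (auto intro!: exI[of _ 1])

lemma rad_pr: "x \<in> radical n I \<Longrightarrow> x \<in> polyring n"
  unfolding radical_def by simp

lemma rad_mult: "r \<in> polyring n \<Longrightarrow> x \<in> radical n (gen_ideal n G) \<Longrightarrow> r * x \<in> radical n (gen_ideal n G)"
  unfolding radical_def
  by (auto simp: pr_mult power_mult_distrib intro!: gi_mult pr_power)



lemma rad_add:
  assumes "x \<in> radical n (gen_ideal n G)" "y \<in> radical n (gen_ideal n G)"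
  shows "x + y \<in> radical n (gen_ideal n G)"
proof -
  from assms obtain k l where x: "x \<in> polyring n" "x ^ k \<in> gen_ideal n G"
    and y: "y \<in> polyring n" "y ^ l \<in> gen_ideal n G"
    unfolding radical_def by auto
  have "(x + y) ^ (k + l) = (\<Sum>i\<le>k+l. of_nat ((k+l) choose i) * x ^ i * y ^ (k + l - i))"
    by (rule binomial_ring)
  also have "\<dots> \<in> gen_ideal n G"
  proof (rule gi_sum)
    fix i assume "i \<in> {..k+l}"
    show "of_nat ((k+l) choose i) * x ^ i * y ^ (k + l - i) \<in> gen_ideal n G"
    proof (cases "k \<le> i")
      case True
      then have "x ^ i = x ^ (i - k) * x ^ k" by (simp add: power_add[symmetric])
      then have "of_nat ((k+l) choose i) * x ^ i * y ^ (k + l - i) =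
          (of_nat ((k+l) choose i) * x ^ (i - k) * y ^ (k + l - i)) * x ^ k"
        by (simp add: mult_ac)
      then show ?thesis using x y
        by (simp add: gi_mult pr_mult pr_power pr_of_nat)
    next
      case False
      then have "y ^ (k + l - i) = y ^ (k - i) * y ^ l" by (simp add: power_add[symmetric])
      then have "of_nat ((k+l) choose i) * x ^ i * y ^ (k + l - i) =
          (of_nat ((k+l) choose i) * x ^ i * y ^ (k - i)) * y ^ l"
        by (simp add: mult_ac)
      then show ?thesis using x y
        by (simp add: gi_mult pr_mult pr_power pr_of_nat)
    qed
  qed
  finally show ?thesis using x y unfolding radical_def by (auto intro: pr_add)
qed

lemma rad_uminus: "x \<in> radical n (gen_ideal n G) \<Longrightarrow> - x \<in> radical n (gen_ideal n G)"
  using rad_mult[OF pr_uminus[OF pr_one]] by fastforce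

lemma rad_diff: "x \<in> radical n (gen_ideal n G) \<Longrightarrow> y \<in> radical n (gen_ideal n G) \<Longrightarrow> x - y \<in> radical n (gen_ideal n G)"
  by (metis diff_conv_add_uminus rad_add rad_uminus)

lemma rad_zero: "0 \<in> radical n (gen_ideal n G)"
  unfolding radical_def by (auto simp: pr_zero intro!: exI[of _ 1] gi_zero)

lemma rad_sum: "(\<And>x. x \<in> S \<Longrightarrow> f x \<in> radical n (gen_ideal n G)) \<Longrightarrow> sum f S \<in> radical n (gen_ideal n G)"
  by (induction S rule: infinite_finite_induct) (auto simp: rad_zero rad_add)

lemma rad_pow: "x \<in> polyring n \<Longrightarrow> x ^ k \<in> gen_ideal n G \<Longrightarrow> x \<in> radical n (gen_ideal n G)"
  unfolding radical_def by auto



abbreviation x1 :: "'k::field mpoly" where "x1 \<equiv> Var 1"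
abbreviation x2 :: "'k::field mpoly" where "x2 \<equiv> Var 2"
abbreviation x3 :: "'k::field mpoly" where "x3 \<equiv> Var 3"
abbreviation x4 :: "'k::field mpoly" where "x4 \<equiv> Var 4"

definition GG :: "nat \<Rightarrow> 'k::field mpoly set" where
  "GG a = {Var 1 ^ ((a + 1) div 2) - Var 3 * Var 4,
            Var 1 ^ 3 - Var 2 ^ 2,
            Var 3 ^ (a + 2) - Var 4 ^ a,
            Var 1 * Var 4 - Var 2 * Var 3}"

definition JJ :: "nat \<Rightarrow> 'k::field mpoly set" where "JJ a = gen_ideal 4 (GG a)"
definition RR :: "nat \<Rightarrow> 'k::field mpoly set" where "RR a = radical 4 (JJ a)"

lemma pV1: "x1 \<in> polyring 4" by (rule pr_Var) simp_all
lemma pV2: "x2 \<in> polyring 4" by (rule pr_Var) simp_all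
lemma pV3: "x3 \<in> polyring 4" by (rule pr_Var) simp_all
lemma pV4: "x4 \<in> polyring 4" by (rule pr_Var) simp_all

lemma pV1': "Var (Suc 0) \<in> polyring 4" by (rule pr_Var) simp_all
lemmas prI = pV1' pV1 pV2 pV3 pV4 pr_add pr_diff pr_mult pr_power pr_uminus pr_one pr_zero

lemma GG_pr: "GG a \<subseteq> polyring 4"
  by (auto simp: GG_def intro!: prI)

lemma JJ_pr: "x \<in> JJ a \<Longrightarrow> x \<in> polyring 4"
  using gi_pr[OF GG_pr] by (simp add: JJ_def)

lemma JJ_RR: "x \<in> JJ a \<Longrightarrow> x \<in> RR a"
  using rad_in[OF GG_pr] by (simp add: JJ_def RR_def)

lemma JJ_add: "x \<in> JJ a \<Longrightarrow> y \<in> JJ a \<Longrightarrow> x + y \<in> JJ a"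
  by (simp add: JJ_def gi_add)
lemma JJ_diff: "x \<in> JJ a \<Longrightarrow> y \<in> JJ a \<Longrightarrow> x - y \<in> JJ a"
  by (simp add: JJ_def gi_diff)
lemma JJ_uminus: "x \<in> JJ a \<Longrightarrow> - x \<in> JJ a"
  by (simp add: JJ_def gi_uminus)
lemma JJ_mult: "r \<in> polyring 4 \<Longrightarrow> x \<in> JJ a \<Longrightarrow> r * x \<in> JJ a"
  by (simp add: JJ_def gi_mult)
lemma JJ_mult2: "r \<in> polyring 4 \<Longrightarrow> x \<in> JJ a \<Longrightarrow> x * r \<in> JJ a"
  by (simp add: JJ_def gi_mult mult.commute)

lemma RR_add: "x \<in> RR a \<Longrightarrow> y \<in> RR a \<Longrightarrow> x + y \<in> RR a"
  by (simp add: RR_def JJ_def rad_add)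
lemma RR_diff: "x \<in> RR a \<Longrightarrow> y \<in> RR a \<Longrightarrow> x - y \<in> RR a"
  by (simp add: RR_def JJ_def rad_diff)
lemma RR_mult: "r \<in> polyring 4 \<Longrightarrow> x \<in> RR a \<Longrightarrow> r * x \<in> RR a"
  by (simp add: RR_def JJ_def rad_mult)
lemma RR_zero: "0 \<in> RR a"
  by (simp add: RR_def JJ_def rad_zero)
lemma RR_sum: "(\<And>x. x \<in> S \<Longrightarrow> f x \<in> RR a) \<Longrightarrow> sum f S \<in> RR a"
  by (simp add: RR_def JJ_def rad_sum)
lemma RR_pow: "x \<in> polyring 4 \<Longrightarrow> x ^ k \<in> JJ a \<Longrightarrow> x \<in> RR a"
  by (simp add: RR_def JJ_def rad_pow)
lemma RR_pr: "x \<in> RR a \<Longrightarrow> x \<in> polyring 4"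
  by (simp add: RR_def rad_pr)

lemma g1: "x1 ^ ((a + 1) div 2) - x3 * x4 \<in> JJ a"
  and g2: "x1 ^ 3 - x2 ^ 2 \<in> JJ a"
  and g3: "x3 ^ (a + 2) - x4 ^ a \<in> JJ a"
  and g4: "x1 * x4 - x2 * x3 \<in> JJ a"
  by (auto simp: JJ_def GG_def intro!: gi_gen)

lemma nilp:
  assumes m: "m \<in> polyring 4" and y: "y \<in> polyring 4"
    and h1: "m * m - y ^ 2 * m \<in> JJ a" and h2: "y ^ e * m \<in> JJ a"
  shows "m \<in> RR a"
proof -
  have ind: "m ^ (n + 1) - y ^ (2 * n) * m \<in> JJ a" for n
  proof (induction n)
    case 0 then show ?case by (simp add: JJ_def gi_zero)
  next
    case (Suc n)
    have "m ^ (Suc n + 1) - y ^ (2 * Suc n) * m =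
        m * (m ^ (n + 1) - y ^ (2 * n) * m) + y ^ (2 * n) * (m * m - y ^ 2 * m)"
      by (simp add: algebra_simps power_add power_mult_distrib power2_eq_square flip: power_mult)
    also have "\<dots> \<in> JJ a"
      by (rule JJ_add[OF JJ_mult[OF m Suc] JJ_mult[OF pr_power[OF y] h1]])
    finally show ?case .
  qed
  have "m ^ (e + 1) = (m ^ (e + 1) - y ^ (2 * e) * m) + y ^ e * (y ^ e * m)"
    by (simp add: algebra_simps flip: power_add mult_2)
  also have "\<dots> \<in> JJ a"
    by (rule JJ_add[OF ind JJ_mult[OF pr_power[OF y] h2]])
  finally show ?thesis using m by (rule RR_pow[rotated])
qed



lemma I_x2m2: fixes u v w z P :: "'a::comm_ring_1" shows
  "v*(w^2 - P*u*v) = P*u*(u^3 - v^2) - u*(P*u^3 - w*z) - w*(u*z - v*w)"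
  by (simp add: algebra_simps power2_eq_square power3_eq_cube)
lemma I_x4m2: fixes u v w z P :: "'a::comm_ring_1" shows
  "z*(w^2 - P*u*v) = -(P*(v*(u*z - v*w) - w*(u^3 - v^2))) - w*(P*u^3 - w*z)"
  by (simp add: algebra_simps power2_eq_square power3_eq_cube)
lemma I_h1m2: fixes u v w z P :: "'a::comm_ring_1" shows
  "(w^2 - P*u*v)*(w^2 - P*u*v) - w^2*(w^2 - P*u*v) = -(P*u*(v*(w^2 - P*u*v)))"
  by (simp add: algebra_simps power2_eq_square power3_eq_cube)
lemma I_x1m3: fixes u v w z P :: "'a::comm_ring_1" shows
  "u*(z^2 - P*u^2*v) = z*(u*z - v*w) - v*(P*u^3 - w*z)"
  by (simp add: algebra_simps power2_eq_square power3_eq_cube)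
lemma I_x3m3: fixes u v w z P :: "'a::comm_ring_1" shows
  "w*(z^2 - P*u^2*v) = P*u^2*(u*z - v*w) - z*(P*u^3 - w*z)"
  by (simp add: algebra_simps power2_eq_square power3_eq_cube)
lemma I_h1m3: fixes u v w z P :: "'a::comm_ring_1" shows
  "(z^2 - P*u^2*v)*(z^2 - P*u^2*v) - z^2*(z^2 - P*u^2*v) = -(P*u*v*(u*(z^2 - P*u^2*v)))"
  by (simp add: algebra_simps power2_eq_square power3_eq_cube)
lemma I_m6: fixes u v w z :: "'a::comm_ring_1" shows
  "(v*z - u^2*w)^2 = (u*w^2 - z^2)*(u^3 - v^2) + (u^2*z - u*v*w)*(u*z - v*w)"
  by (simp add: algebra_simps power2_eq_square power3_eq_cube)

context
  fixes a d :: nat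
  assumes ad: "a + 1 = 2 * (d + 3)"
begin

lemma bdef: "(a + 1) div 2 = d + 3" using ad by simp

lemma pow_b: "(x::'b::monoid_mult) ^ ((a + 1) div 2) = x ^ d * x ^ 3"
  by (simp only: bdef power_add)

lemma g1': "Var 1 ^ d * Var 1 ^ 3 - x3 * x4 \<in> JJ a"
  by (metis g1 pow_b)

lemma m6R: "x2 * x4 - x1^2 * x3 \<in> RR a"
proof (rule RR_pow[of _ 2])
  show "x2 * x4 - x1^2 * x3 \<in> polyring 4" by (intro prI)
  show "(x2 * x4 - x1^2 * x3) ^ 2 \<in> JJ a"
    unfolding I_m6 by (rule JJ_add[OF JJ_mult[OF _ g2] JJ_mult[OF _ g4]]; intro prI)
qed

lemma m2R: "x3^2 - x1^d * x1 * x2 \<in> RR a"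
proof (rule nilp[where y = x3 and e = "a + 2"])
  let ?m = "x3^2 - x1^d * x1 * x2 :: 'a mpoly"
  have x2m: "x2 * ?m \<in> JJ a"
    unfolding I_x2m2[where z = x4] by (rule JJ_diff[OF JJ_diff[OF JJ_mult[OF _ g2] JJ_mult[OF _ g1']] JJ_mult[OF _ g4]]; intro prI)
  have x4m: "x4 * ?m \<in> JJ a"
    unfolding I_x4m2 by (rule JJ_diff[OF JJ_uminus[OF JJ_mult[OF _ JJ_diff[OF JJ_mult[OF _ g4] JJ_mult[OF _ g2]]]] JJ_mult[OF _ g1']]; intro prI)
  show "?m \<in> polyring 4" by (intro prI)
  show "x3 \<in> polyring 4" by (intro prI)
  show "?m * ?m - x3^2 * ?m \<in> JJ a"
    unfolding I_h1m2 by (rule JJ_uminus[OF JJ_mult[OF _ x2m]]; intro prI)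
  have a1: "a = (a - 1) + 1" using ad by simp
  have "x3 ^ (a + 2) * ?m = x4 ^ (a - 1) * (x4 * ?m) + ?m * (x3 ^ (a + 2) - x4 ^ a)"
    by (subst (3) a1) (simp add: algebra_simps power_add)
  also have "\<dots> \<in> JJ a"
    by (rule JJ_add[OF JJ_mult[OF _ x4m] JJ_mult[OF _ g3]]; intro prI)
  finally show "x3 ^ (a + 2) * ?m \<in> JJ a" .
qed

lemma m3R: "x4^2 - x1^d * x1^2 * x2 \<in> RR a"
proof (rule nilp[where y = x4 and e = "a"])
  let ?m = "x4^2 - x1^d * x1^2 * x2 :: 'a mpoly"
  have x1m: "x1 * ?m \<in> JJ a"
    unfolding I_x1m3[where w = x3] by (rule JJ_diff[OF JJ_mult[OF _ g4] JJ_mult[OF _ g1']]; intro prI)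
  have x3m: "x3 * ?m \<in> JJ a"
    unfolding I_x3m3 by (rule JJ_diff[OF JJ_mult[OF _ g4] JJ_mult[OF _ g1']]; intro prI)
  show "?m \<in> polyring 4" by (intro prI)
  show "x4 \<in> polyring 4" by (intro prI)
  show "?m * ?m - x4^2 * ?m \<in> JJ a"
    unfolding I_h1m3 by (rule JJ_uminus[OF JJ_mult[OF _ x1m]]; intro prI)
  have "x4 ^ a * ?m = x3 ^ (a + 1) * (x3 * ?m) - ?m * (x3 ^ (a + 2) - x4 ^ a)"
    by (simp add: algebra_simps power_add power2_eq_square)
  also have "\<dots> \<in> JJ a"
    by (rule JJ_diff[OF JJ_mult[OF _ x3m] JJ_mult[OF _ g3]]; intro prI)
  finally show "x4 ^ a * ?m \<in> JJ a" .
qed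

end


definition mon :: "nat \<Rightarrow> nat \<Rightarrow> nat \<Rightarrow> nat \<Rightarrow> 'k::field mpoly" where
  "mon i j k l = x1^i * x2^j * x3^k * x4^l"

definition dg4 :: "nat \<Rightarrow> nat \<Rightarrow> nat \<Rightarrow> nat \<Rightarrow> nat \<Rightarrow> nat" where
  "dg4 a i j k l = 4*i + 6*j + a*k + (a+2)*l"

definition NF :: "nat \<Rightarrow> nat \<Rightarrow> 'k::field mpoly" where
  "NF a D = (if D mod 4 = 0 then x1^(D div 4)
     else if D mod 4 = 2 then x1^((D-6) div 4) * x2
     else if D mod 4 = a mod 4 then x1^((D-a) div 4) * x3
     else x1^((D-a-2) div 4) * x4)"

lemma mon_pr: "mon i j k l \<in> polyring 4"
  unfolding mon_def by (intro prI)

lemma NF_pr: "NF a D \<in> polyring 4"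
  unfolding NF_def by (auto intro!: prI)

lemma stepR:
  fixes A B Q :: "'k::field mpoly"
  assumes "A - B \<in> RR a" "Q \<in> polyring 4"
    "mon i j k l = Q * A" "mon i' j' k' l' = Q * B"
    "(mon i' j' k' l' :: 'k mpoly) - NF a (dg4 a i' j' k' l') \<in> RR a"
    "dg4 a i j k l = dg4 a i' j' k' l'"
  shows "(mon i j k l :: 'k mpoly) - NF a (dg4 a i j k l) \<in> RR a"
proof -
  have "mon i j k l - NF a (dg4 a i j k l) = Q * (A - B) + (mon i' j' k' l' - NF a (dg4 a i' j' k' l'))"
    using assms(3,4,6) by (simp add: algebra_simps)
  also have "\<dots> \<in> RR a" by (rule RR_add[OF RR_mult[OF assms(2,1)] assms(5)])
  finally show ?thesis .
qed

context
  fixes a d :: nat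
  assumes ad: "a + 1 = 2 * (d + 3)"
begin

lemma mv1: "x2^2 - x1^3 \<in> RR a"
  using JJ_RR[OF JJ_uminus[OF g2]] by simp
lemma mv2: "x3^2 - x1^(d+1) * x2 \<in> RR a"
  using m2R[OF ad] by (simp only: power_add power_one_right)
lemma mv3: "x4^2 - x1^(d+2) * x2 \<in> RR a"
  using m3R[OF ad] by (simp only: power_add)
lemma mv4: "x3 * x4 - x1^(d+3) \<in> RR a"
  using JJ_RR[OF JJ_uminus[OF g1'[OF ad]]] by (simp add: power_add)
lemma mv5: "x2 * x3 - x1 * x4 \<in> RR a"
  using JJ_RR[OF JJ_uminus[OF g4]] by simp
lemma mv6: "x2 * x4 - x1^2 * x3 \<in> RR a"
  using m6R[OF ad] by simp

lemma baseNF: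
  assumes "j \<le> 1" "k \<le> 1" "l \<le> 1" "\<not> (1 \<le> k \<and> 1 \<le> l)" "\<not> (1 \<le> j \<and> 1 \<le> k)" "\<not> (1 \<le> j \<and> 1 \<le> l)"
  shows "mon i j k l = NF a (dg4 a i j k l)"
proof -
  consider "j = 0" "k = 0" "l = 0" | "j = 1" "k = 0" "l = 0" | "j = 0" "k = 1" "l = 0"
    | "j = 0" "k = 0" "l = 1"
    using assms by linarith
  then show ?thesis
  proof cases
    case 1 then show ?thesis by (simp add: mon_def NF_def dg4_def)
  next
    case 2
    have "(4 * i + 6) mod 4 = 2" "(4 * i + 6 - 6) div 4 = i" by simp_all
    then show ?thesis using 2 by (simp add: mon_def NF_def dg4_def)
  next
    case 3
    have "(4 * i + a) mod 4 \<noteq> 0" "(4 * i + a) mod 4 \<noteq> 2" using ad by presburger+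
    moreover have "(4 * i + a) mod 4 = a mod 4" "(4 * i + a - a) div 4 = i" by simp_all
    ultimately show ?thesis using 3 by (simp add: mon_def NF_def dg4_def)
  next
    case 4
    have "(4 * i + (a + 2)) mod 4 \<noteq> 0" "(4 * i + (a + 2)) mod 4 \<noteq> 2"
      "(4 * i + (a + 2)) mod 4 \<noteq> a mod 4" using ad by presburger+
    moreover have "(4 * i + (a + 2) - a - 2) div 4 = i" by simp
    ultimately show ?thesis using 4 by (simp add: mon_def NF_def dg4_def)
  qed
qed

lemma core: "(mon i j k l :: 'k::field mpoly) - NF a (dg4 a i j k l) \<in> RR a"
proof (induction "j+k+l" arbitrary: i j k l rule: less_induct)
  case less
  show ?case
  proof (cases "2 \<le> j")
    case True
    then obtain j0 where j: "j = j0 + 2" by (metis add.commute le_Suc_ex)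
    show ?thesis
      apply (rule stepR[OF mv1 mon_pr[of i j0 k l], of i j k l "i+3" j0 k l])
      apply (simp add: mon_def j power_add power2_eq_square power3_eq_cube mult_ac)
      apply (simp add: mon_def power_add power2_eq_square power3_eq_cube mult_ac)
      apply (rule less; simp add: j)
      using ad unfolding dg4_def j by (simp add: algebra_simps)
  next
    case nJ: False
    show ?thesis
    proof (cases "2 \<le> k")
      case True
      then obtain k0 where k: "k = k0 + 2" by (metis add.commute le_Suc_ex)
      show ?thesis
        apply (rule stepR[OF mv2 mon_pr[of i j k0 l], of i j k l "i+(d+1)" "j+1" k0 l])
        apply (simp add: mon_def k power_add power2_eq_square power3_eq_cube mult_ac)
        apply (simp add: mon_def power_add power2_eq_square power3_eq_cube mult_ac)
        apply (rule less; simp add: k)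
        using ad unfolding dg4_def k by (simp add: algebra_simps)
    next
      case nK: False
      show ?thesis
      proof (cases "2 \<le> l")
        case True
        then obtain l0 where l: "l = l0 + 2" by (metis add.commute le_Suc_ex)
        show ?thesis
          apply (rule stepR[OF mv3 mon_pr[of i j k l0], of i j k l "i+(d+2)" "j+1" k l0])
          apply (simp add: mon_def l power_add power2_eq_square power3_eq_cube mult_ac)
          apply (simp add: mon_def power_add power2_eq_square power3_eq_cube mult_ac)
          apply (rule less; simp add: l)
          using ad unfolding dg4_def l by (simp add: algebra_simps)
      next
        case nL: False
        show ?thesis
        proof (cases "1 \<le> k \<and> 1 \<le> l")
          case True
          then obtain k0 l0 where kl: "k = k0 + 1" "l = l0 + 1" by (metis add.commute le_Suc_ex)
          show ?thesis
            apply (rule stepR[OF mv4 mon_pr[of i j k0 l0], of i j k l "i+(d+3)" j k0 l0])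
            apply (simp add: mon_def kl power_add power2_eq_square power3_eq_cube mult_ac)
            apply (simp add: mon_def power_add power2_eq_square power3_eq_cube mult_ac)
            apply (rule less; simp add: kl)
            using ad unfolding dg4_def kl by (simp add: algebra_simps)
        next
          case nKL: False
          show ?thesis
          proof (cases "1 \<le> j \<and> 1 \<le> k")
            case True
            then obtain j0 k0 where jk: "j = j0 + 1" "k = k0 + 1" by (metis add.commute le_Suc_ex)
            show ?thesis
              apply (rule stepR[OF mv5 mon_pr[of i j0 k0 l], of i j k l "i+1" j0 k0 "l+1"])
              apply (simp add: mon_def jk power_add power2_eq_square power3_eq_cube mult_ac)
              apply (simp add: mon_def power_add power2_eq_square power3_eq_cube mult_ac)
              apply (rule less; simp add: jk)
              using ad unfolding dg4_def jk by (simp add: algebra_simps)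
          next
            case nJK: False
            show ?thesis
            proof (cases "1 \<le> j \<and> 1 \<le> l")
              case True
              then obtain j0 l0 where jl: "j = j0 + 1" "l = l0 + 1" by (metis add.commute le_Suc_ex)
              show ?thesis
                apply (rule stepR[OF mv6 mon_pr[of i j0 k l0], of i j k l "i+2" j0 "k+1" l0])
                apply (simp add: mon_def jl power_add power2_eq_square power3_eq_cube mult_ac)
                apply (simp add: mon_def power_add power2_eq_square power3_eq_cube mult_ac)
                apply (rule less; simp add: jl)
                using ad unfolding dg4_def jl by (simp add: algebra_simps)
            next
              case nJL: False
              have "(mon i j k l :: 'k mpoly) = NF a (dg4 a i j k l)"
                by (rule baseNF) (use nJ nK nL nKL nJK nJL in auto)
              then show ?thesis by (simp add: RR_zero)
            qed
          qed
        qed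
      qed
    qed
  qed
qed

end


abbreviation wt :: "nat \<Rightarrow> nat \<Rightarrow> nat" where
  "wt a \<equiv> (\<lambda>i. if i = 1 then 4 else if i = 2 then 6 else if i = 3 then a else a + 2)"

lemma single_sum0: "Poly_Mapping.single k (sum f S) = (\<Sum>x\<in>S. Poly_Mapping.single k (f x))"
  by (induction S rule: infinite_finite_induct) (simp_all add: single_add)

lemma keys4: "Poly_Mapping.keys m \<subseteq> {1..4::nat} \<Longrightarrow> Poly_Mapping.keys m \<subseteq> {1,2,3,4}"
  by auto

lemma m_decomp:
  assumes "Poly_Mapping.keys m \<subseteq> {1..4::nat}"
  shows "m = Poly_Mapping.single 1 (Poly_Mapping.lookup m 1) + Poly_Mapping.single 2 (Poly_Mapping.lookup m 2)
       + Poly_Mapping.single 3 (Poly_Mapping.lookup m 3) + Poly_Mapping.single 4 (Poly_Mapping.lookup m 4)"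
proof (rule poly_mapping_eqI)
  fix k
  show "Poly_Mapping.lookup m k = Poly_Mapping.lookup (Poly_Mapping.single 1 (Poly_Mapping.lookup m 1) + Poly_Mapping.single 2 (Poly_Mapping.lookup m 2)
       + Poly_Mapping.single 3 (Poly_Mapping.lookup m 3) + Poly_Mapping.single 4 (Poly_Mapping.lookup m 4)) k"
  proof (cases "k \<in> {1,2,3,4}")
    case True then show ?thesis by (auto simp: lookup_add lookup_single when_def)
  next
    case False
    then have "k \<notin> Poly_Mapping.keys m" using keys4[OF assms] by blast
    then have "Poly_Mapping.lookup m k = 0" by (simp add: in_keys_iff)
    with False show ?thesis by (auto simp: lookup_add lookup_single when_def)
  qed
qed

lemma mono_single:
  assumes "Poly_Mapping.keys m \<subseteq> {1..4::nat}"
  shows "(Poly_Mapping.single m 1 :: 'k::field mpoly) =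
    mon (Poly_Mapping.lookup m 1) (Poly_Mapping.lookup m 2) (Poly_Mapping.lookup m 3) (Poly_Mapping.lookup m 4)"
  apply (subst m_decomp[OF assms])
  apply (simp only: mon_def Var_power mult_single)
  apply simp
  done

lemma dg_wt:
  assumes "Poly_Mapping.keys m \<subseteq> {1..4::nat}"
  shows "dg (wt a) m = dg4 a (Poly_Mapping.lookup m 1) (Poly_Mapping.lookup m 2) (Poly_Mapping.lookup m 3) (Poly_Mapping.lookup m 4)"
  by (subst dg_superset[OF _ keys4[OF assms]]) (simp_all add: dg4_def)

lemma toric_sub:
  assumes ad: "a + 1 = 2 * (d + 3)" and p: "(p :: 'k::field mpoly) \<in> toric_ideal 4 (wt a)"
  shows "p \<in> RR a"
proof -
  let ?K = "Poly_Mapping.keys p"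
  let ?w = "wt a"
  have pr: "Poly_Mapping.keys m \<subseteq> {1..4}" if "m \<in> ?K" for m
    using p that by (auto simp: toric_ideal_def polyring_def)
  have tm0: "toric_map ?w p = 0" using p by (simp add: toric_ideal_def)
  define q where "q = (\<Sum>m\<in>?K. Poly_Mapping.single 0 (Poly_Mapping.lookup p m) * NF a (dg ?w m))"
  have p_eq: "p = (\<Sum>m\<in>?K. Poly_Mapping.single 0 (Poly_Mapping.lookup p m) * Poly_Mapping.single m 1)"
    by (subst pm_decomp[of p]) (simp add: mult_single)
  have "p - q = (\<Sum>m\<in>?K. Poly_Mapping.single 0 (Poly_Mapping.lookup p m) * (Poly_Mapping.single m 1 - NF a (dg ?w m)))"
    by (subst p_eq) (simp add: q_def sum_subtractf right_diff_distrib)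
  also have "\<dots> \<in> RR a"
  proof (rule RR_sum)
    fix m assume m: "m \<in> ?K"
    have "(Poly_Mapping.single m 1 :: 'k mpoly) - NF a (dg ?w m) =
      mon (Poly_Mapping.lookup m 1) (Poly_Mapping.lookup m 2) (Poly_Mapping.lookup m 3) (Poly_Mapping.lookup m 4)
      - NF a (dg4 a (Poly_Mapping.lookup m 1) (Poly_Mapping.lookup m 2) (Poly_Mapping.lookup m 3) (Poly_Mapping.lookup m 4))"
      by (simp only: mono_single[OF pr[OF m]] dg_wt[OF pr[OF m]])
    also have "\<dots> \<in> RR a" by (rule core[OF ad])
    finally have "(Poly_Mapping.single m 1 :: 'k mpoly) - NF a (dg ?w m) \<in> RR a" .
    then show "Poly_Mapping.single 0 (Poly_Mapping.lookup p m) * (Poly_Mapping.single m 1 - NF a (dg ?w m)) \<in> RR a"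
      by (rule RR_mult[OF pr_const])
  qed
  finally have pq: "p - q \<in> RR a" .
  have coeff0: "(\<Sum>m\<in>{x\<in>?K. dg ?w x = D}. Poly_Mapping.lookup p m) = 0" for D
  proof -
    have "(\<Sum>m\<in>{x\<in>?K. dg ?w x = D}. Poly_Mapping.lookup p m) = (\<Sum>m\<in>?K. if dg ?w m = D then Poly_Mapping.lookup p m else 0)"
      by (simp add: sum.inter_filter)
    also have "\<dots> = Polynomial.coeff (toric_map ?w p) D"
      by (simp add: tm_def2 coeff_sum)
    also have "\<dots> = 0" using tm0 by simp
    finally show ?thesis .
  qed
  have "q = (\<Sum>D\<in>dg ?w ` ?K. \<Sum>m\<in>{x\<in>?K. dg ?w x = D}. Poly_Mapping.single 0 (Poly_Mapping.lookup p m) * NF a (dg ?w m))"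
    unfolding q_def by (rule sum.image_gen) simp
  also have "\<dots> = (\<Sum>D\<in>dg ?w ` ?K. \<Sum>m\<in>{x\<in>?K. dg ?w x = D}. Poly_Mapping.single 0 (Poly_Mapping.lookup p m) * NF a D)"
    by (intro sum.cong) auto
  also have "\<dots> = (\<Sum>D\<in>dg ?w ` ?K. Poly_Mapping.single 0 (\<Sum>m\<in>{x\<in>?K. dg ?w x = D}. Poly_Mapping.lookup p m) * NF a D)"
    by (simp add: single_sum0 sum_distrib_right)
  also have "\<dots> = 0" by (simp only: coeff0 single_zero mult_zero_left sum.neutral_const)
  finally have "q = 0" .
  with pq show ?thesis by simp
qed

lemma tm_GG:
  assumes "odd a" "g \<in> GG a"
  shows "toric_map (wt a) (g :: 'k::field mpoly) = 0"
proof -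
  have e: "4 * ((a + 1) div 2) = a + (a + 2)" "4 * (Suc a div 2) = Suc (Suc (a + a))" using assms(1) by presburger+
  show ?thesis using assms(2) unfolding GG_def
    by (auto simp: tm_diff tm_mult tm_power tm_Var monom_power mult_monom e)
qed

lemma rad_sub:
  assumes "odd a" "x \<in> RR a"
  shows "(x :: 'k::field mpoly) \<in> toric_ideal 4 (wt a)"
proof -
  from assms(2) obtain k where x: "x \<in> polyring 4" "x ^ k \<in> gen_ideal 4 (GG a)"
    by (auto simp: RR_def JJ_def radical_def)
  then obtain c where c: "x ^ k = (\<Sum>g\<in>GG a. c g * g)"
    by (auto simp: gen_ideal_def)
  have "toric_map (wt a) x ^ k = toric_map (wt a) (x ^ k)" by (simp add: tm_power)
  also have "\<dots> = 0" unfolding c tm_sum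
  proof (intro sum.neutral ballI)
    fix g :: "'k mpoly" assume g: "g \<in> GG a"
    show "toric_map (wt a) (c g * g) = 0"
      by (simp only: tm_mult tm_GG[OF assms(1) g] mult_zero_right)
  qed
  finally have "toric_map (wt a) x = 0" by simp
  with x show ?thesis by (simp add: toric_ideal_def)
qed

theorem mainTheorem8:
  fixes a :: nat
  assumes "odd a" and "a \<ge> 7"
  shows "(toric_ideal 4 (\<lambda>i. if i = 1 then 4 else if i = 2 then 6 else if i = 3 then a else a + 2)
           :: 'k::field mpoly set)
       = radical 4 (gen_ideal 4
           {Var 1 ^ ((a + 1) div 2) - Var 3 * Var 4,
            Var 1 ^ 3 - Var 2 ^ 2,
            Var 3 ^ (a + 2) - Var 4 ^ a,
            Var 1 * Var 4 - Var 2 * Var 3})"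
proof -
  obtain d where ad: "a + 1 = 2 * (d + 3)"
  proof
    show "a + 1 = 2 * ((a + 1) div 2 - 3 + 3)" using assms by presburger
  qed
  have R: "radical 4 (gen_ideal 4
           {Var 1 ^ ((a + 1) div 2) - Var 3 * Var 4,
            Var 1 ^ 3 - Var 2 ^ 2,
            Var 3 ^ (a + 2) - Var 4 ^ a,
            Var 1 * Var 4 - Var 2 * Var 3}) = (RR a :: 'k mpoly set)"
    by (simp add: RR_def JJ_def GG_def)
  show ?thesis unfolding R
    using toric_sub[OF ad] rad_sub[OF assms(1)] by blast
qed

end
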